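(* Let $\mathcal M$ be a rank 3 acyclic oriented matroid with chirotope $\chi:E^3\to\{-1,0,1\}$ on $E=X\sqcup\{\omega\}$, where $\omega$ is not a coloop and is neither parallel nor antiparallel to any other element. Suppose there are distinct positive cocircuits $A,B$ of $\mathcal M$, neither containing $\omega$, such that $\chi(\omega,a,b)=1$ for all $a\in A\setminus B$ and $b\in B\setminus A$. Suppose $\mathcal M$ has a realization, i.e. vectors $\mathbf v_e=(x_e,y_e,z_e)^T\in\mathbb{R}^3$, $e\in E$, with $\chi(e,f,g)=\operatorname{sign}\det(\mathbf v_e,\mathbf v_f,\mathbf v_g)$ for all $e,f,g\in E$. Then a realization $(\mathbf v_e)_{e\in E}$ of $\mathcal M$ can be chosen such that: (1) $\mathbf v_\omega=(0,0,1)^T$; (2) $x_a^2+y_a^2=1$ for all $a\in X$; (3)–(5) there are $\theta_a\in(0,180)$ (degrees) with $x_a=-\cos\theta_a$ and $y_a=-\sin\theta_a$ for each $a\in X$; (6) $z_a>0$ for each $a\in X$; (7) putting $r_a=z_a>0$, for all $a,b,c\in X$ with $\theta_a<\theta_b<\theta_c$ one has $r_a\sin(\theta_c-\theta_b)-r_b\sin(\theta_c-\theta_a)+r_c\sin(\theta_b-\theta_a)=0$, $>0$, or $<0$ according as $\chi(a,b,c)$ is $0$, $1$, or $-1$; (8) $(r_a,\theta_a)_{a\in X}$ are polar coordinates for the realization, i.e. the line with homogeneous coordinates $\mathbf v_a$ is $\{(p,q):p\cos\theta_a+q\sin\theta_a=r_a\}$.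
   Context: Standard oriented matroid terminology (chirotope, acyclic, cocircuit, coloop, parallel elements, realization) is used. Angles are in degrees. *)

theory Defs
  imports "HOL-Analysis.Analysis"
begin

text \<open>Rank 3 oriented matroids on a finite ground set E, given by a chirotope
  chi : E^3 -> {-1,0,1} (values outside E are irrelevant).  Chirotope axioms
  (B0), (B1), (B2'') of Bjoerner--Las Vergnas--Sturmfels--White--Ziegler, Def. 3.5.3, for r = 3.\<close>

definition chirotope3 :: "'a set \<Rightarrow> ('a \<Rightarrow> 'a \<Rightarrow> 'a \<Rightarrow> int) \<Rightarrow> bool" where
  "chirotope3 E chi \<longleftrightarrow>
     finite E \<and>
     (\<forall>x\<in>E. \<forall>y\<in>E. \<forall>z\<in>E. chi x y z \<in> {-1, 0, 1}) \<and>
     (\<exists>x\<in>E. \<exists>y\<in>E. \<exists>z\<in>E. chi x y z \<noteq> 0) \<and>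
     (\<forall>x\<in>E. \<forall>y\<in>E. \<forall>z\<in>E. chi y x z = - chi x y z \<and> chi x z y = - chi x y z) \<and>
     (\<forall>x1\<in>E. \<forall>x2\<in>E. \<forall>x3\<in>E. \<forall>x4\<in>E. \<forall>y1\<in>E. \<forall>y2\<in>E.
        (let S = {- chi x2 x3 x4 * chi x1 y1 y2, chi x1 x3 x4 * chi x2 y1 y2,
                  - chi x1 x2 x4 * chi x3 y1 y2, chi x1 x2 x3 * chi x4 y1 y2}
         in S = {0} \<or> {-1, 1} \<subseteq> S))"

definition sign_vec_on :: "'a set \<Rightarrow> ('a \<Rightarrow> int) \<Rightarrow> bool" where
  "sign_vec_on E X \<longleftrightarrow> (\<forall>e. (e \<notin> E \<longrightarrow> X e = 0) \<and> X e \<in> {-1, 0, 1})"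

definition supp :: "('a \<Rightarrow> int) \<Rightarrow> 'a set" where
  "supp X = {e. X e \<noteq> 0}"

definition cocircuit :: "'a set \<Rightarrow> ('a \<Rightarrow> 'a \<Rightarrow> 'a \<Rightarrow> int) \<Rightarrow> ('a \<Rightarrow> int) \<Rightarrow> bool" where
  "cocircuit E chi D \<longleftrightarrow>
     (\<exists>y1\<in>E. \<exists>y2\<in>E. \<exists>s\<in>{-1, 1::int}. (\<exists>e\<in>E. chi y1 y2 e \<noteq> 0) \<and>
        D = (\<lambda>e. if e \<in> E then s * chi y1 y2 e else 0))"

definition orth :: "'a set \<Rightarrow> ('a \<Rightarrow> int) \<Rightarrow> ('a \<Rightarrow> int) \<Rightarrow> bool" where
  "orth E X Y \<longleftrightarrow> (\<forall>e\<in>E. X e * Y e = 0) \<or>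
      ((\<exists>e\<in>E. X e * Y e = 1) \<and> (\<exists>f\<in>E. X f * Y f = -1))"

definition om_vector :: "'a set \<Rightarrow> ('a \<Rightarrow> 'a \<Rightarrow> 'a \<Rightarrow> int) \<Rightarrow> ('a \<Rightarrow> int) \<Rightarrow> bool" where
  "om_vector E chi X \<longleftrightarrow> sign_vec_on E X \<and> (\<forall>D. cocircuit E chi D \<longrightarrow> orth E X D)"

definition circuit :: "'a set \<Rightarrow> ('a \<Rightarrow> 'a \<Rightarrow> 'a \<Rightarrow> int) \<Rightarrow> ('a \<Rightarrow> int) \<Rightarrow> bool" where
  "circuit E chi C \<longleftrightarrow> om_vector E chi C \<and> supp C \<noteq> {} \<and>
     (\<forall>Y. om_vector E chi Y \<and> supp Y \<noteq> {} \<and> supp Y \<subseteq> supp C \<longrightarrow> supp Y = supp C)"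

definition acyclic_om :: "'a set \<Rightarrow> ('a \<Rightarrow> 'a \<Rightarrow> 'a \<Rightarrow> int) \<Rightarrow> bool" where
  "acyclic_om E chi \<longleftrightarrow> \<not> (\<exists>C. circuit E chi C \<and> (\<forall>e. C e \<ge> 0))"

definition coloop :: "'a set \<Rightarrow> ('a \<Rightarrow> 'a \<Rightarrow> 'a \<Rightarrow> int) \<Rightarrow> 'a \<Rightarrow> bool" where
  "coloop E chi e \<longleftrightarrow> e \<in> E \<and>
     (\<forall>x\<in>E. \<forall>y\<in>E. \<forall>z\<in>E. chi x y z \<noteq> 0 \<longrightarrow> e \<in> {x, y, z})"

definition parallel :: "'a set \<Rightarrow> ('a \<Rightarrow> 'a \<Rightarrow> 'a \<Rightarrow> int) \<Rightarrow> 'a \<Rightarrow> 'a \<Rightarrow> bool" where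
  "parallel E chi e f \<longleftrightarrow> e \<noteq> f \<and>
     (\<exists>C. circuit E chi C \<and> supp C = {e, f} \<and> C e = - C f)"

definition antiparallel :: "'a set \<Rightarrow> ('a \<Rightarrow> 'a \<Rightarrow> 'a \<Rightarrow> int) \<Rightarrow> 'a \<Rightarrow> 'a \<Rightarrow> bool" where
  "antiparallel E chi e f \<longleftrightarrow> e \<noteq> f \<and>
     (\<exists>C. circuit E chi C \<and> supp C = {e, f} \<and> C e = C f)"

text \<open>A positive cocircuit, identified with its support A.\<close>

definition positive_cocircuit :: "'a set \<Rightarrow> ('a \<Rightarrow> 'a \<Rightarrow> 'a \<Rightarrow> int) \<Rightarrow> 'a set \<Rightarrow> bool" where
  "positive_cocircuit E chi A \<longleftrightarrow> cocircuit E chi (\<lambda>e. if e \<in> A then 1 else 0)"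

definition realizes :: "'a set \<Rightarrow> ('a \<Rightarrow> 'a \<Rightarrow> 'a \<Rightarrow> int) \<Rightarrow> ('a \<Rightarrow> real^3) \<Rightarrow> bool" where
  "realizes E chi v \<longleftrightarrow>
     (\<forall>e\<in>E. \<forall>f\<in>E. \<forall>g\<in>E.
        real_of_int (chi e f g) = sgn (det (vector [v e, v f, v g] :: real^3^3)))"

definition cosd :: "real \<Rightarrow> real" where "cosd t = cos (t * pi / 180)"
definition sind :: "real \<Rightarrow> real" where "sind t = sin (t * pi / 180)"

end

theory Submission
  imports Defs
begin

definition lin :: "real^3 \<Rightarrow> real^3 \<Rightarrow> real^3 \<Rightarrow> real^3 \<Rightarrow> real^3" where
  "lin l1 l2 l3 w = vector [l1 \<bullet> w, l2 \<bullet> w, l3 \<bullet> w]"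

lemma det3: "det (vector [a, b, c] :: real^3^3) =
   a$1*b$2*c$3 + a$2*b$3*c$1 + a$3*b$1*c$2 - a$1*b$3*c$2 - a$2*b$1*c$3 - a$3*b$2*c$1"
  by (simp add: det_3)

lemma inner3: "(x::real^3) \<bullet> y = x$1*y$1 + x$2*y$2 + x$3*y$3"
  by (simp add: inner_vec_def sum_3)

lemma det_lin: "det (vector [lin l1 l2 l3 a, lin l1 l2 l3 b, lin l1 l2 l3 c] :: real^3^3)
   = det (vector [l1, l2, l3] :: real^3^3) * det (vector [a, b, c] :: real^3^3)"
  unfolding det3 lin_def inner3 vector_3 by algebra

lemma det_scale: "det (vector [x *\<^sub>R a, y *\<^sub>R b, z *\<^sub>R c] :: real^3^3)
   = x * y * z * det (vector [a, b, c] :: real^3^3)"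
  unfolding det3 by (simp add: algebra_simps)

lemma cross_dot: "cross3 a b \<bullet> c = det (vector [a, b, c] :: real^3^3)"
  unfolding det3 inner3 cross3_def vector_3 by (simp add: algebra_simps)

lemma cramer: "det (vector [x, y, z] :: real^3^3) *\<^sub>R w = det (vector [y, z, w] :: real^3^3) *\<^sub>R x
   + det (vector [z, x, w] :: real^3^3) *\<^sub>R y + det (vector [x, y, w] :: real^3^3) *\<^sub>R z"
  unfolding det3 by (simp add: vec_eq_iff forall_3 algebra_simps)

lemma bac_cab: "cross3 x (cross3 y z) = (x \<bullet> z) *\<^sub>R y - (x \<bullet> y) *\<^sub>R z"
  unfolding inner3 cross3_def by (simp add: vec_eq_iff forall_3 algebra_simps)

lemma det_l: "det (vector [cross3 u f, - f, u + K *\<^sub>R f] :: real^3^3) = cross3 u f \<bullet> cross3 u f"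
  unfolding det3 inner3 cross3_def by (simp add: algebra_simps)

lemma det_lastscale: "det (vector [a, b, k *\<^sub>R c] :: real^3^3) = k * det (vector [a, b, c] :: real^3^3)"
  unfolding det3 by (simp add: algebra_simps)


lemma realD: "realizes E chi v \<Longrightarrow> e\<in>E \<Longrightarrow> f\<in>E \<Longrightarrow> g\<in>E \<Longrightarrow>
   real_of_int (chi e f g) = sgn (det (vector [v e, v f, v g] :: real^3^3))"
  unfolding realizes_def by blast


lemma chi_vals: "realizes E chi v \<Longrightarrow> e\<in>E \<Longrightarrow> f\<in>E \<Longrightarrow> g\<in>E \<Longrightarrow> chi e f g \<in> {-1,0,1}"
proof -
  assume a: "realizes E chi v" "e\<in>E" "f\<in>E" "g\<in>E"
  have r: "real_of_int (chi e f g) = sgn (det (vector [v e, v f, v g] :: real^3^3))" using realD[OF a] .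
  show ?thesis
  proof (cases "det (vector [v e, v f, v g] :: real^3^3)" rule: linorder_cases[of _ 0])
    case less then have "real_of_int (chi e f g) = -1" using r by simp
    then have "chi e f g = -1" by linarith
    then show ?thesis by simp
  next
    case equal then have "real_of_int (chi e f g) = 0" using r by simp
    then have "chi e f g = 0" by linarith
    then show ?thesis by simp
  next
    case greater then have "real_of_int (chi e f g) = 1" using r by simp
    then have "chi e f g = 1" by linarith
    then show ?thesis by simp
  qed
qed


lemma no_loop:
  assumes acyc: "acyclic_om E chi" and r: "realizes E chi v" and e: "e \<in> E" and z: "v e = 0"
  shows False
proof -
  define C where "C = (\<lambda>x. if x = e then 1 else 0::int)"
  have De: "D e = 0" if "cocircuit E chi D" for D
  proof -
    from that obtain y1 y2 s where y: "y1\<in>E" "y2\<in>E" and D: "D = (\<lambda>x. if x \<in> E then s * chi y1 y2 x else 0)"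
      unfolding cocircuit_def by blast
    have "real_of_int (chi y1 y2 e) = 0" using realD[OF r y e] z by (simp add: det3)
    then show ?thesis using D e by simp
  qed
  have ov: "om_vector E chi C"
    unfolding om_vector_def sign_vec_on_def orth_def C_def using e De by auto
  have sC: "supp C = {e}" unfolding supp_def C_def by auto
  have "circuit E chi C" unfolding circuit_def using ov sC by auto
  moreover have "\<forall>x. C x \<ge> 0" unfolding C_def by auto
  ultimately show False using acyc unfolding acyclic_om_def by blast
qed


lemma span:
  assumes om: "chirotope3 E chi" and r: "realizes E chi v" and w: "w \<noteq> 0"
  shows "\<exists>y1\<in>E. \<exists>y2\<in>E. det (vector [v y1, v y2, w] :: real^3^3) \<noteq> 0"
proof (rule ccontr)
  assume n: "\<not> ?thesis"
  from om obtain x y z where xyz: "x\<in>E" "y\<in>E" "z\<in>E" "chi x y z \<noteq> 0"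
    unfolding chirotope3_def by blast
  have d: "det (vector [v x, v y, v z] :: real^3^3) \<noteq> 0" using realD[OF r xyz(1-3)] xyz(4) by auto
  have "det (vector [v x, v y, v z] :: real^3^3) *\<^sub>R w = 0"
  proof -
    have "det (vector [v y, v z, w] :: real^3^3) = 0" "det (vector [v z, v x, w] :: real^3^3) = 0"
      "det (vector [v x, v y, w] :: real^3^3) = 0" using n xyz by auto
    then show ?thesis using cramer[of "v x" "v y" "v z" w] by simp
  qed
  then show False using d w by simp
qed


lemma single_nonvec:
  assumes Y: "om_vector E chi Y" and x0: "x0 \<in> E" and y: "y1\<in>E" "y2\<in>E"
    and r: "realizes E chi v"
    and other: "\<forall>x\<in>E. x \<noteq> x0 \<longrightarrow> Y x = 0" and nz: "Y x0 \<noteq> 0"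
    and d: "det (vector [v y1, v y2, v x0] :: real^3^3) \<noteq> 0"
  shows False
proof -
  define D where "D = (\<lambda>x. if x \<in> E then 1 * chi y1 y2 x else 0)"
  have "chi y1 y2 x0 \<noteq> 0" using realD[OF r y x0] d by (auto simp: sgn_eq_0_iff)
  then have cc: "cocircuit E chi D" unfolding cocircuit_def D_def using y x0 by blast
  then have o: "orth E Y D" using Y unfolding om_vector_def by blast
  have p0: "Y x0 * D x0 \<noteq> 0" using \<open>chi y1 y2 x0 \<noteq> 0\<close> nz x0 unfolding D_def by simp
  have px: "\<And>x. x\<in>E \<Longrightarrow> x \<noteq> x0 \<Longrightarrow> Y x * D x = 0" using other by simp
  from o show False unfolding orth_def
  proof
    assume "\<forall>e\<in>E. Y e * D e = 0" then show False using p0 x0 by blast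
  next
    assume "(\<exists>e\<in>E. Y e * D e = 1) \<and> (\<exists>f\<in>E. Y f * D f = -1)"
    then obtain e f where "e\<in>E" "f\<in>E" "Y e * D e = 1" "Y f * D f = -1" by blast
    then show False using px by (cases "e = x0"; cases "f = x0") auto
  qed
qed


lemma par_contra:
  assumes om: "chirotope3 E chi" and r: "realizes E chi v" and e: "e \<in> E" and f: "f \<in> E"
    and ef: "e \<noteq> f" and ve: "v e \<noteq> 0" and vf: "v f \<noteq> 0" and lam: "v f = l *\<^sub>R v e"
  shows "parallel E chi e f \<or> antiparallel E chi e f"
proof -
  have l0: "l \<noteq> 0" using vf lam by auto
  define \<sigma> where "\<sigma> = (if l > 0 then 1 else -1::int)"
  have sg: "sgn l = real_of_int \<sigma>" using l0 unfolding \<sigma>_def by (auto simp: sgn_if)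
  define C where "C = (\<lambda>x. if x = f then 1 else if x = e then - \<sigma> else 0)"
  have orthC: "orth E C D" if "cocircuit E chi D" for D
  proof -
    from that obtain y1 y2 s where y: "y1\<in>E" "y2\<in>E" and s: "s \<in> {-1,1::int}"
      and D: "D = (\<lambda>x. if x \<in> E then s * chi y1 y2 x else 0)"
      unfolding cocircuit_def by blast
    have "real_of_int (chi y1 y2 f) = sgn l * real_of_int (chi y1 y2 e)"
      using realD[OF r y f] realD[OF r y e] lam by (simp add: det_lastscale sgn_mult)
    then have cf: "chi y1 y2 f = \<sigma> * chi y1 y2 e" using sg by (metis of_int_eq_iff of_int_mult)
    define q where "q = s * \<sigma> * chi y1 y2 e"
    have q: "q \<in> {-1,0,1}" using chi_vals[OF r y e] s unfolding q_def \<sigma>_def by auto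
    have pf: "C f * D f = q" using f cf unfolding C_def D q_def by (simp add: algebra_simps)
    have pe: "C e * D e = - q" using e ef \<sigma>_def unfolding C_def D q_def by (auto simp: algebra_simps)
    have po: "\<And>x. x \<noteq> e \<Longrightarrow> x \<noteq> f \<Longrightarrow> C x * D x = 0" unfolding C_def by simp
    show ?thesis
    proof (cases "q = 0")
      case True
      have "\<forall>x\<in>E. C x * D x = 0"
      proof
        fix x assume "x \<in> E"
        show "C x * D x = 0" using po pe pf True by (cases "x = e"; cases "x = f") auto
      qed
      then show ?thesis unfolding orth_def by blast
    next
      case False
      then have "q = 1 \<or> q = -1" using q by auto
      then have "(\<exists>x\<in>E. C x * D x = 1) \<and> (\<exists>y\<in>E. C y * D y = -1)"
      proof
        assume "q = 1" then show ?thesis using pe pf e f by auto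
      next
        assume "q = -1" then show ?thesis using pe pf e f by auto
      qed
      then show ?thesis unfolding orth_def by blast
    qed
  qed
  have sv: "sign_vec_on E C" unfolding sign_vec_on_def C_def \<sigma>_def using e f by auto
  have ov: "om_vector E chi C" unfolding om_vector_def using sv orthC by blast
  have sC: "supp C = {e, f}" unfolding supp_def C_def \<sigma>_def using ef by auto
  have minC: "supp Y = supp C" if Y: "om_vector E chi Y" "supp Y \<noteq> {}" "supp Y \<subseteq> supp C" for Y
  proof (rule ccontr)
    assume ne: "supp Y \<noteq> supp C"
    have Yz: "\<And>x. x \<noteq> e \<Longrightarrow> x \<noteq> f \<Longrightarrow> Y x = 0" using Y(3) sC unfolding supp_def by auto
    show False
    proof (cases "Y e = 0")
      case True
      have "Y f \<noteq> 0"
      proof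
        assume "Y f = 0"
        then have "\<forall>x. Y x = 0" using Yz True by metis
        then show False using Y(2) unfolding supp_def by simp
      qed
      obtain y1 y2 where y: "y1\<in>E" "y2\<in>E" "det (vector [v y1, v y2, v f] :: real^3^3) \<noteq> 0"
        using span[OF om r vf] by blast
      have "\<forall>x\<in>E. x \<noteq> f \<longrightarrow> Y x = 0" using Yz True by metis
      then show False using single_nonvec[OF Y(1) f y(1,2) r _ \<open>Y f \<noteq> 0\<close> y(3)] by blast
    next
      case False
      then have "Y f = 0" using ne sC Y(3) unfolding supp_def by auto
      obtain y1 y2 where y: "y1\<in>E" "y2\<in>E" "det (vector [v y1, v y2, v e] :: real^3^3) \<noteq> 0"
        using span[OF om r ve] by blast
      have "\<forall>x\<in>E. x \<noteq> e \<longrightarrow> Y x = 0" using Yz \<open>Y f = 0\<close> by metis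
      then show False using single_nonvec[OF Y(1) e y(1,2) r _ False y(3)] by blast
    qed
  qed
  have circ: "circuit E chi C" unfolding circuit_def using ov sC minC by auto
  show ?thesis
  proof (cases "l > 0")
    case True
    then have "C e = - C f" unfolding C_def \<sigma>_def using ef by simp
    then show ?thesis unfolding parallel_def using circ sC ef by blast
  next
    case False
    then have "C e = C f" unfolding C_def \<sigma>_def using ef by simp
    then show ?thesis unfolding antiparallel_def using circ sC ef by blast
  qed
qed




lemma poscc_fun:
  assumes r: "realizes E chi v" and P: "positive_cocircuit E chi P"
  shows "\<exists>\<phi>. (\<forall>e\<in>E. e \<in> P \<longrightarrow> \<phi> \<bullet> v e > 0) \<and> (\<forall>e\<in>E. e \<notin> P \<longrightarrow> \<phi> \<bullet> v e = 0) \<and> P \<subseteq> E \<and> P \<noteq> {}"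
proof -
  from P obtain y1 y2 s e0 where y: "y1\<in>E" "y2\<in>E" and s: "s \<in> {-1,1::int}" and e0: "e0 \<in> E" "chi y1 y2 e0 \<noteq> 0"
    and eq: "(\<lambda>e. if e \<in> P then 1 else 0) = (\<lambda>e. if e \<in> E then s * chi y1 y2 e else 0)"
    unfolding positive_cocircuit_def cocircuit_def by blast
  have pt: "\<And>e. (if e \<in> P then 1 else 0::int) = (if e \<in> E then s * chi y1 y2 e else 0)"
    using eq by metis
  define \<phi> where "\<phi> = of_int s *\<^sub>R cross3 (v y1) (v y2)"
  have key: "sgn (\<phi> \<bullet> v e) = (if e \<in> P then 1 else 0)" if e: "e \<in> E" for e
  proof -
    have "\<phi> \<bullet> v e = of_int s * det (vector [v y1, v y2, v e] :: real^3^3)"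
      unfolding \<phi>_def by (simp add: cross_dot)
    then have "sgn (\<phi> \<bullet> v e) = of_int s * sgn (det (vector [v y1, v y2, v e] :: real^3^3))"
      using s by (auto simp: sgn_mult)
    also have "\<dots> = of_int (s * chi y1 y2 e)" using realD[OF r y e] by simp
    also have "\<dots> = (if e \<in> P then 1 else 0)"
    proof -
      have h: "s * chi y1 y2 e = (if e\<in>P then 1 else 0)" using pt[of e] e by simp
      show ?thesis unfolding h by simp
    qed
    finally show ?thesis .
  qed
  have "(\<forall>e\<in>E. e \<in> P \<longrightarrow> \<phi> \<bullet> v e > 0)"
  proof (intro ballI impI)
    fix e assume "e \<in> E" "e \<in> P" then have "sgn (\<phi> \<bullet> v e) = 1" using key by simp
    then show "\<phi> \<bullet> v e > 0" by (simp add: sgn_1_pos)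
  qed
  moreover have "(\<forall>e\<in>E. e \<notin> P \<longrightarrow> \<phi> \<bullet> v e = 0)"
  proof (intro ballI impI)
    fix e assume "e \<in> E" "e \<notin> P" then have "sgn (\<phi> \<bullet> v e) = 0" using key by simp
    then show "\<phi> \<bullet> v e = 0" by (simp add: sgn_eq_0_iff)
  qed
  moreover have "P \<subseteq> E" using pt by (metis one_neq_zero subsetI)
  moreover have "e0 \<in> P" using pt[of e0] e0 s by (auto split: if_splits)
  ultimately show ?thesis by blast
qed

lemma sind_diff: "sind (a - b) = sind a * cosd b - cosd a * sind b"
proof -
  have h: "(a - b) * pi / 180 = a * pi / 180 - b * pi / 180" by (simp add: field_simps)
  show ?thesis unfolding sind_def cosd_def by (simp only: h sin_diff)
qed

lemma s_det:
  assumes "x$1 = - cosd \<alpha>" "x$2 = - sind \<alpha>" "y$1 = - cosd \<beta>" "y$2 = - sind \<beta>"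
    "z$1 = - cosd \<gamma>" "z$2 = - sind \<gamma>"
  shows "x$3 * sind (\<gamma> - \<beta>) - y$3 * sind (\<gamma> - \<alpha>) + z$3 * sind (\<beta> - \<alpha>)
     = det (vector [x, y, z] :: real^3^3)"
  unfolding det3 sind_diff using assms by (simp add: algebra_simps)



theorem lemmal:
  fixes E X :: "'a set" and \<omega> :: 'a and chi :: "'a \<Rightarrow> 'a \<Rightarrow> 'a \<Rightarrow> int"
    and A B :: "'a set" and v0 :: "'a \<Rightarrow> real^3"
  assumes om: "chirotope3 E chi"
    and acyc: "acyclic_om E chi"
    and E_def: "E = insert \<omega> X" and omX: "\<omega> \<notin> X"
    and not_coloop: "\<not> coloop E chi \<omega>"
    and not_par: "\<forall>f\<in>E. \<not> parallel E chi \<omega> f \<and> \<not> antiparallel E chi \<omega> f"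
    and A_cc: "positive_cocircuit E chi A" and B_cc: "positive_cocircuit E chi B"
    and AB: "A \<noteq> B" and omA: "\<omega> \<notin> A" and omB: "\<omega> \<notin> B"
    and sep: "\<forall>a\<in>A - B. \<forall>b\<in>B - A. chi \<omega> a b = 1"
    and real0: "realizes E chi v0"
  shows "\<exists>v :: 'a \<Rightarrow> real^3. \<exists>\<theta> :: 'a \<Rightarrow> real.
     realizes E chi v \<and>
     v \<omega> = vector [0, 0, 1] \<and>
     (\<forall>a\<in>X. (v a $ 1)\<^sup>2 + (v a $ 2)\<^sup>2 = 1) \<and>
     (\<forall>a\<in>X. 0 < \<theta> a \<and> \<theta> a < 180 \<and> v a $ 1 = - cosd (\<theta> a) \<and> v a $ 2 = - sind (\<theta> a)) \<and>
     (\<forall>a\<in>X. v a $ 3 > 0) \<and>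
     (\<forall>a\<in>X. \<forall>b\<in>X. \<forall>c\<in>X. \<theta> a < \<theta> b \<and> \<theta> b < \<theta> c \<longrightarrow>
        (let s = v a $ 3 * sind (\<theta> c - \<theta> b) - v b $ 3 * sind (\<theta> c - \<theta> a)
                 + v c $ 3 * sind (\<theta> b - \<theta> a)
         in (chi a b c = 0 \<longrightarrow> s = 0) \<and> (chi a b c = 1 \<longrightarrow> s > 0) \<and> (chi a b c = -1 \<longrightarrow> s < 0))) \<and>
     (\<forall>a\<in>X. {(p, q). v a $ 1 * p + v a $ 2 * q + v a $ 3 = 0}
            = {(p, q). p * cosd (\<theta> a) + q * sind (\<theta> a) = v a $ 3})"
proof -
  have fin: "finite E" using om unfolding chirotope3_def by blast
  have wE: "\<omega> \<in> E" and XE: "X \<subseteq> E" using E_def by auto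
  have finX: "finite X" using fin XE finite_subset by blast
  define u where "u = v0 \<omega>"
  have u0: "u \<noteq> 0" using no_loop[OF acyc real0 wE] unfolding u_def by blast
  obtain \<phi>A where pA: "\<forall>e\<in>E. e \<in> A \<longrightarrow> \<phi>A \<bullet> v0 e > 0" "\<forall>e\<in>E. e \<notin> A \<longrightarrow> \<phi>A \<bullet> v0 e = 0" "A \<subseteq> E" "A \<noteq> {}"
    using poscc_fun[OF real0 A_cc] by blast
  obtain \<phi>B where pB: "\<forall>e\<in>E. e \<in> B \<longrightarrow> \<phi>B \<bullet> v0 e > 0" "\<forall>e\<in>E. e \<notin> B \<longrightarrow> \<phi>B \<bullet> v0 e = 0" "B \<subseteq> E" "B \<noteq> {}"
    using poscc_fun[OF real0 B_cc] by blast
  define \<phi> where "\<phi> = \<phi>A + \<phi>B"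
  have uA: "u \<bullet> \<phi>A = 0" using pA(2) wE omA unfolding u_def by (simp add: inner_commute)
  have uB: "u \<bullet> \<phi>B = 0" using pB(2) wE omB unfolding u_def by (simp add: inner_commute)
  have uA': "\<phi>A \<bullet> u = 0" using uA by (simp only: inner_commute)
  have uB': "\<phi>B \<bullet> u = 0" using uB by (simp only: inner_commute)
  have \<phi>u: "\<phi> \<bullet> u = 0" unfolding \<phi>_def by (simp add: inner_add_left uA' uB')
  have geA: "\<phi>A \<bullet> v0 e \<ge> 0" if "e \<in> E" for e using pA that by (cases "e \<in> A") auto
  have geB: "\<phi>B \<bullet> v0 e \<ge> 0" if "e \<in> E" for e using pB that by (cases "e \<in> B") auto
  obtain eA where eA: "eA \<in> A" using pA(4) by blast
  have \<phi>A0: "\<phi>A \<noteq> 0" using pA(1) pA(3) eA by fastforce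
  define n where "n = cross3 \<phi>A \<phi>B"
  have n0: "n \<noteq> 0"
  proof
    assume n: "n = 0"
    have "cross3 \<phi>A n = (\<phi>A \<bullet> \<phi>B) *\<^sub>R \<phi>A - (\<phi>A \<bullet> \<phi>A) *\<^sub>R \<phi>B" unfolding n_def by (rule bac_cab)
    then have "(\<phi>A \<bullet> \<phi>A) *\<^sub>R \<phi>B = (\<phi>A \<bullet> \<phi>B) *\<^sub>R \<phi>A" using n by simp
    moreover have "\<phi>A \<bullet> \<phi>A \<noteq> 0" using \<phi>A0 by simp
    ultimately obtain c where c: "\<phi>B = c *\<^sub>R \<phi>A"
      by (metis (no_types, lifting) divideR_right eq_vector_fraction_iff)
    obtain f where f: "f \<in> B" using pB(4) by blast
    have "c * (\<phi>A \<bullet> v0 f) > 0" using pB(1) pB(3) f c by auto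
    moreover have "\<phi>A \<bullet> v0 f \<ge> 0" using geA pB(3) f by auto
    ultimately have cpos: "c > 0" by (simp add: zero_less_mult_iff)
    have "x \<in> A \<longleftrightarrow> x \<in> B" for x
    proof (cases "x \<in> E")
      case True
      have "x \<in> A \<longleftrightarrow> \<phi>A \<bullet> v0 x > 0" using pA True by force
      also have "\<dots> \<longleftrightarrow> c * (\<phi>A \<bullet> v0 x) > 0" using cpos by (simp add: zero_less_mult_iff)
      also have "\<dots> \<longleftrightarrow> \<phi>B \<bullet> v0 x > 0" using c by simp
      also have "\<dots> \<longleftrightarrow> x \<in> B" using pB True by force
      finally show ?thesis .
    next
      case False then show ?thesis using pA(3) pB(3) by blast
    qed
    then show False using AB by blast
  qed
  have par: "w = ((n \<bullet> w) / (n \<bullet> n)) *\<^sub>R n" if "w \<bullet> \<phi>A = 0" "w \<bullet> \<phi>B = 0" for w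
  proof -
    have "cross3 w n = 0" unfolding n_def bac_cab using that by simp
    then have h: "(n \<bullet> n) *\<^sub>R w = (n \<bullet> w) *\<^sub>R n" using bac_cab[of n w n] by simp
    have nn: "n \<bullet> n \<noteq> 0" using n0 by simp
    have "w = inverse (n \<bullet> n) *\<^sub>R ((n \<bullet> n) *\<^sub>R w)" using nn by simp
    also have "\<dots> = (n \<bullet> w / (n \<bullet> n)) *\<^sub>R n" unfolding h by (simp add: divide_inverse mult.commute)
    finally show ?thesis .
  qed
  have pos: "\<phi> \<bullet> v0 a > 0" if a: "a \<in> X" for a
  proof -
    have aE: "a \<in> E" using a XE by blast
    show ?thesis
    proof (cases "a \<in> A \<or> a \<in> B")
      case True
      then show ?thesis using pA(1) pB(1) geA geB aE unfolding \<phi>_def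
        by (auto simp: inner_add_left add_pos_nonneg add_nonneg_pos)
    next
      case False
      have zA: "v0 a \<bullet> \<phi>A = 0" using pA(2) aE False by (simp add: inner_commute)
      have zB: "v0 a \<bullet> \<phi>B = 0" using pB(2) aE False by (simp add: inner_commute)
      define \<alpha> where "\<alpha> = (n \<bullet> u) / (n \<bullet> n)"
      define \<beta> where "\<beta> = (n \<bullet> v0 a) / (n \<bullet> n)"
      have hu: "u = \<alpha> *\<^sub>R n" unfolding \<alpha>_def using par[OF uA uB] .
      have ha: "v0 a = \<beta> *\<^sub>R n" unfolding \<beta>_def using par[OF zA zB] .
      have va0: "v0 a \<noteq> 0" using no_loop[OF acyc real0 aE] by blast
      have al0: "\<alpha> \<noteq> 0" using u0 hu by auto
      have "v0 a = (\<beta> / \<alpha>) *\<^sub>R v0 \<omega>" using hu ha al0 unfolding u_def by simp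
      then have "parallel E chi \<omega> a \<or> antiparallel E chi \<omega> a"
        using par_contra[OF om real0 wE aE _ _ va0] u0 omX a unfolding u_def by blast
      then show ?thesis using not_par aE by blast
    qed
  qed
  define K where "K = 1 + (\<Sum>a\<in>X. \<bar>u \<bullet> v0 a\<bar> / (\<phi> \<bullet> v0 a))"
  define l1 where "l1 = cross3 u \<phi>"
  define l2 where "l2 = - \<phi>"
  define l3 where "l3 = u + K *\<^sub>R \<phi>"
  define p where "p e = lin l1 l2 l3 (v0 e)" for e
  define t where "t e = sqrt ((p e $ 1)\<^sup>2 + (p e $ 2)\<^sup>2)" for e
  define cc where "cc e = (if e = \<omega> then 1 / (u \<bullet> u) else 1 / t e)" for e
  define v where "v e = cc e *\<^sub>R p e" for e
  define \<theta> where "\<theta> a = arccos (- (v a $ 1)) * 180 / pi" for a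
  have p1: "p e $ 1 = l1 \<bullet> v0 e" and p2: "p e $ 2 = - (\<phi> \<bullet> v0 e)"
    and p3: "p e $ 3 = u \<bullet> v0 e + K * (\<phi> \<bullet> v0 e)" for e
    unfolding p_def lin_def l2_def l3_def by (simp_all add: inner_add_left)
  have pw: "p \<omega> = vector [0, 0, u \<bullet> u]"
  proof -
    have "l1 \<bullet> u = 0" unfolding l1_def by (metis dot_cross_self(1) inner_commute)
    then show ?thesis using \<phi>u p1[of \<omega>] p2[of \<omega>] p3[of \<omega>] unfolding u_def[symmetric]
      by (simp add: vec_eq_iff forall_3 inner_commute)
  qed
  obtain a0 where a0: "a0 \<in> X" using pA(3,4) omA E_def by blast
  have \<phi>0: "\<phi> \<noteq> 0" using pos[OF a0] by auto
  have detl: "det (vector [l1, l2, l3] :: real^3^3) > 0"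
  proof -
    have "(norm (cross3 u \<phi>))\<^sup>2 + (u \<bullet> \<phi>)\<^sup>2 = (norm u * norm \<phi>)\<^sup>2" by (rule norm_cross_dot)
    then have "(norm (cross3 u \<phi>))\<^sup>2 > 0" using \<phi>u u0 \<phi>0 by (simp add: inner_commute)
    then have "cross3 u \<phi> \<bullet> cross3 u \<phi> > 0" by (simp add: power2_norm_eq_inner)
    then show ?thesis unfolding l1_def l2_def l3_def det_l .
  qed
  have Kbig: "K * (\<phi> \<bullet> v0 a) > \<bar>u \<bullet> v0 a\<bar>" if a: "a \<in> X" for a
  proof -
    have "\<bar>u \<bullet> v0 a\<bar> / (\<phi> \<bullet> v0 a) \<le> (\<Sum>a\<in>X. \<bar>u \<bullet> v0 a\<bar> / (\<phi> \<bullet> v0 a))"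
      by (rule member_le_sum[OF a _ finX]) (use pos in \<open>auto intro: divide_nonneg_pos\<close>)
    then have "K \<ge> 1 + \<bar>u \<bullet> v0 a\<bar> / (\<phi> \<bullet> v0 a)" unfolding K_def by simp
    then have m: "(1 + \<bar>u \<bullet> v0 a\<bar> / (\<phi> \<bullet> v0 a)) * (\<phi> \<bullet> v0 a) \<le> K * (\<phi> \<bullet> v0 a)"
      using pos[OF a] by (simp add: mult_right_mono)
    have "(1 + \<bar>u \<bullet> v0 a\<bar> / (\<phi> \<bullet> v0 a)) * (\<phi> \<bullet> v0 a) = \<phi> \<bullet> v0 a + \<bar>u \<bullet> v0 a\<bar>"
      using pos[OF a] by (simp add: field_simps)
    then show ?thesis using m pos[OF a] by linarith
  qed
  have tpos: "t a > 0" if "a \<in> X" for a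
    unfolding t_def using pos[OF that] p2[of a] by (simp add: add_nonneg_pos)
  have ccpos: "cc e > 0" if "e \<in> E" for e
  proof (cases "e = \<omega>")
    case True then show ?thesis unfolding cc_def using u0 by simp
  next
    case False then have "e \<in> X" using that E_def by blast
    then show ?thesis unfolding cc_def using False tpos by simp
  qed
  have realv: "realizes E chi v"
    unfolding realizes_def
  proof (intro ballI)
    fix e f g assume efg: "e \<in> E" "f \<in> E" "g \<in> E"
    have "det (vector [v e, v f, v g] :: real^3^3)
       = (cc e * cc f * cc g * det (vector [l1, l2, l3] :: real^3^3)) * det (vector [v0 e, v0 f, v0 g] :: real^3^3)"
      unfolding v_def det_scale p_def det_lin by simp
    moreover have "cc e * cc f * cc g * det (vector [l1, l2, l3] :: real^3^3) > 0"
      using ccpos efg detl by simp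
    moreover have gen: "\<And>c d::real. c > 0 \<Longrightarrow> sgn (c*d) = sgn d" by (simp add: sgn_mult)
    ultimately have "sgn (det (vector [v e, v f, v g] :: real^3^3)) = sgn (det (vector [v0 e, v0 f, v0 g] :: real^3^3))"
      by metis
    then show "real_of_int (chi e f g) = sgn (det (vector [v e, v f, v g] :: real^3^3))"
      using realD[OF real0 efg] by simp
  qed
  have vw: "v \<omega> = vector [0, 0, 1]"
    unfolding v_def cc_def pw using u0 by (simp add: vec_eq_iff forall_3)
  have va: "v a $ 1 = p a $ 1 / t a" "v a $ 2 = p a $ 2 / t a" "v a $ 3 = p a $ 3 / t a" if "a \<in> X" for a
    using that omX unfolding v_def cc_def by auto
  have v3: "v a $ 3 > 0" if a: "a \<in> X" for a
  proof -
    have "p a $ 3 > 0" using p3[of a] Kbig[OF a] by linarith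
    then show ?thesis using va[OF a] tpos[OF a] by simp
  qed
  have v2: "v a $ 2 < 0" if a: "a \<in> X" for a
    using va[OF a] tpos[OF a] p2[of a] pos[OF a] by (simp add: divide_neg_pos)
  have v12: "(v a $ 1)\<^sup>2 + (v a $ 2)\<^sup>2 = 1" if a: "a \<in> X" for a
  proof -
    have tt: "(t a)\<^sup>2 = (p a $ 1)\<^sup>2 + (p a $ 2)\<^sup>2" unfolding t_def by simp
    have "(v a $ 1)\<^sup>2 + (v a $ 2)\<^sup>2 = ((p a $ 1)\<^sup>2 + (p a $ 2)\<^sup>2) / (t a)\<^sup>2"
      unfolding va[OF a] by (simp add: power_divide add_divide_distrib)
    then show ?thesis using tt tpos[OF a] p2[of a] pos[OF a] by simp
  qed
  have angle: "0 < \<theta> a \<and> \<theta> a < 180 \<and> v a $ 1 = - cosd (\<theta> a) \<and> v a $ 2 = - sind (\<theta> a)"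
    if a: "a \<in> X" for a
  proof -
    define x where "x = - (v a $ 1)"
    have q: "(v a $ 2)\<^sup>2 > 0" using v2[OF a] by simp
    have x2: "x\<^sup>2 < 1" unfolding x_def power2_minus using v12[OF a] q by linarith
    then have xb: "-1 < x" "x < 1" by (auto simp: abs_square_less_1 abs_less_iff)
    have ar: "0 < arccos x" "arccos x < pi" using arccos_lt_bounded[OF xb] by auto
    have th: "\<theta> a * pi / 180 = arccos x" unfolding \<theta>_def x_def by simp
    have c: "cosd (\<theta> a) = x" unfolding cosd_def th using xb by simp
    have "sind (\<theta> a) = sqrt (1 - x\<^sup>2)" unfolding sind_def th using xb by (simp add: sin_arccos)
    also have "1 - x\<^sup>2 = (v a $ 2)\<^sup>2" using v12[OF a] unfolding x_def by simp
    also have "sqrt ((v a $ 2)\<^sup>2) = - (v a $ 2)" using v2[OF a] by simp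
    finally have s: "sind (\<theta> a) = - (v a $ 2)" .
    have "0 < \<theta> a" "\<theta> a < 180" using ar unfolding \<theta>_def x_def[symmetric]
      by (simp_all add: divide_less_eq pi_gt_zero)
    then show ?thesis using c s unfolding x_def by simp
  qed
  show ?thesis
  proof (intro exI conjI)
    show "realizes E chi v" by (rule realv)
    show "v \<omega> = vector [0, 0, 1]" by (rule vw)
    show "\<forall>a\<in>X. (v a $ 1)\<^sup>2 + (v a $ 2)\<^sup>2 = 1" using v12 by blast
    show "\<forall>a\<in>X. 0 < \<theta> a \<and> \<theta> a < 180 \<and> v a $ 1 = - cosd (\<theta> a) \<and> v a $ 2 = - sind (\<theta> a)"
      using angle by blast
    show "\<forall>a\<in>X. v a $ 3 > 0" using v3 by blast
    show "\<forall>a\<in>X. \<forall>b\<in>X. \<forall>c\<in>X. \<theta> a < \<theta> b \<and> \<theta> b < \<theta> c \<longrightarrow>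
        (let s = v a $ 3 * sind (\<theta> c - \<theta> b) - v b $ 3 * sind (\<theta> c - \<theta> a)
                 + v c $ 3 * sind (\<theta> b - \<theta> a)
         in (chi a b c = 0 \<longrightarrow> s = 0) \<and> (chi a b c = 1 \<longrightarrow> s > 0) \<and> (chi a b c = -1 \<longrightarrow> s < 0))"
    proof (intro ballI impI)
      fix a b c assume abc: "a \<in> X" "b \<in> X" "c \<in> X"
      have sd: "v a $ 3 * sind (\<theta> c - \<theta> b) - v b $ 3 * sind (\<theta> c - \<theta> a) + v c $ 3 * sind (\<theta> b - \<theta> a)
         = det (vector [v a, v b, v c] :: real^3^3)"
        by (rule s_det) (use angle abc in auto)
      have r: "real_of_int (chi a b c) = sgn (det (vector [v a, v b, v c] :: real^3^3))"
        using realD[OF realv] abc XE by blast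
      show "let s = v a $ 3 * sind (\<theta> c - \<theta> b) - v b $ 3 * sind (\<theta> c - \<theta> a)
                 + v c $ 3 * sind (\<theta> b - \<theta> a)
         in (chi a b c = 0 \<longrightarrow> s = 0) \<and> (chi a b c = 1 \<longrightarrow> s > 0) \<and> (chi a b c = -1 \<longrightarrow> s < 0)"
      proof (cases "det (vector [v a, v b, v c] :: real^3^3)" rule: linorder_cases[of _ 0])
        case less then have "real_of_int (chi a b c) = -1" using r by simp
        then have "chi a b c = -1" by linarith
        then show ?thesis using less sd unfolding Let_def by simp
      next
        case equal then have "real_of_int (chi a b c) = 0" using r by simp
        then have "chi a b c = 0" by linarith
        then show ?thesis using equal sd unfolding Let_def by simp
      next
        case greater then have "real_of_int (chi a b c) = 1" using r by simp
        then have "chi a b c = 1" by linarith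
        then show ?thesis using greater sd unfolding Let_def by simp
      qed
    qed
    show "\<forall>a\<in>X. {(p, q). v a $ 1 * p + v a $ 2 * q + v a $ 3 = 0}
            = {(p, q). p * cosd (\<theta> a) + q * sind (\<theta> a) = v a $ 3}"
    proof
      fix a assume a: "a \<in> X"
      show "{(p, q). v a $ 1 * p + v a $ 2 * q + v a $ 3 = 0}
            = {(p, q). p * cosd (\<theta> a) + q * sind (\<theta> a) = v a $ 3}"
      proof -
        have e: "v a $ 1 * p + v a $ 2 * q = - (p * cosd (\<theta> a) + q * sind (\<theta> a))" for p q
          using angle[OF a] by (simp add: algebra_simps)
        have "(v a $ 1 * p + v a $ 2 * q + v a $ 3 = 0) = (p * cosd (\<theta> a) + q * sind (\<theta> a) = v a $ 3)" for p q
          using e[of p q] by linarith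
        then show ?thesis by auto
      qed
    qed
  qed
qed


end
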